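(* Let $(N,+,* )$ be a planar nearring presented by $(\Phi,R,M)$. Then: (1) If $D(N)\ne\{0\}$ and every element of $D(N)$ is a zero multiplier, then $GC(N)$ equals the set of zero multipliers, which is an ideal of $N$. (2) If $D(N)$ meets at least two distinct nonzero $\Phi$-orbits and at least one element of $D(N)$ is not a zero multiplier, then $GC(N)=\{0\}$. (3) If $D(N)\setminus\{0\}$ is contained in a single $\Phi$-orbit $r\Phi$ with $r\in R\setminus M$ and $D(N)\ne\{0\}$, then $rZ(\Phi)\cup\{0\}\subseteq GC(N)\subseteq r\Phi\cup\{0\}$. (4) If $D(N)=\{0\}$, then $GC(N)=N$.
   Context: A (right) nearring $(N,+,* )$ is a set with a group $(N,+)$, a semigroup $(N,* )$, and right distributivity $(a+b)*c=a*c+b*c$. $N$ is planar if the relation $a\cong b$ ($x*a=x*b$ for all $x$) has at least $3$ classes and for all $a,b,c$ with $a\not\cong b$ the equation $x*a=x*b+c$ has a unique solution. An ideal is a normal additive subgroup $I$ with $i*n\in I$ and $n*m-n*(m+i)\in I$ for all $i\in I$, $n,m\in N$. Every planar nearring arises as follows, and we always consider it so presented. $\Phi\le \mathrm{Aut}(N,+)$ acts on the right, is fixed point free, and $n\mapsto -n+n\phi$ is bijective for each $\phi\ne\mathrm{id}$. $R$ is a set of representatives of the $\Phi$-orbits of $N\setminus\{0\}$ and $M\subseteq R$. Each $a\ne0$ is uniquely $a=r_a\phi_a$, $r_a\in R$, $\phi_a\in\Phi$. Multiplication: $a*b=0$ if $b=0$ or $r_b\in M$, else $a*b=a\phi_b$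 (and $0*b=0$). The zero multipliers are the elements of $M\Phi\cup\{0\}$, i.e. those $n$ with $x*n=0$ for all $x$. $D(N)=\{n: n*(a+b)=n*a+n*b\ \forall a,b\}$. The generalized centre is $GC(N)=\{n\in N: n*d=d*n \text{ for all } d\in D(N)\}$. $Z(\Phi)$ is the centre of $\Phi$. *)

theory Defs
  imports Main
begin

text \<open>(N,+) is the type 'a with its (not necessarily abelian) group structure.
  Phi is a set of maps acting on the right: n phi is written phi n.\<close>

definition is_aut :: "('a::group_add \<Rightarrow> 'a) \<Rightarrow> bool" where
  "is_aut f \<longleftrightarrow> bij f \<and> (\<forall>x y. f (x + y) = f x + f y)"

definition orbit :: "('a \<Rightarrow> 'a) set \<Rightarrow> 'a \<Rightarrow> 'a set" where
  "orbit Phi a = {phi a | phi. phi \<in> Phi}"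

definition ferrero_pair :: "('a::group_add \<Rightarrow> 'a) set \<Rightarrow> bool" where
  "ferrero_pair Phi \<longleftrightarrow>
     (\<forall>phi\<in>Phi. is_aut phi) \<and> id \<in> Phi \<and>
     (\<forall>phi\<in>Phi. \<forall>psi\<in>Phi. phi \<circ> psi \<in> Phi) \<and>
     (\<forall>phi\<in>Phi. inv phi \<in> Phi) \<and>
     (\<forall>phi\<in>Phi. phi \<noteq> id \<longrightarrow> (\<forall>x. phi x = x \<longrightarrow> x = 0)) \<and>
     (\<forall>phi\<in>Phi. phi \<noteq> id \<longrightarrow> bij (\<lambda>n. - n + phi n))"

definition presentation :: "('a::group_add \<Rightarrow> 'a) set \<Rightarrow> 'a set \<Rightarrow> 'a set \<Rightarrow> bool" where
  "presentation Phi R M \<longleftrightarrow> ferrero_pair Phi \<and> 0 \<notin> R \<and>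
     (\<forall>a. a \<noteq> 0 \<longrightarrow> (\<exists>!r. r \<in> R \<and> a \<in> orbit Phi r)) \<and> M \<subseteq> R"

definition rep :: "('a \<Rightarrow> 'a) set \<Rightarrow> 'a set \<Rightarrow> 'a \<Rightarrow> 'a" where
  "rep Phi R a = (THE r. r \<in> R \<and> a \<in> orbit Phi r)"

definition autof :: "('a \<Rightarrow> 'a) set \<Rightarrow> 'a set \<Rightarrow> 'a \<Rightarrow> ('a \<Rightarrow> 'a)" where
  "autof Phi R a = (THE phi. phi \<in> Phi \<and> a = phi (rep Phi R a))"

definition pmult :: "('a::group_add \<Rightarrow> 'a) set \<Rightarrow> 'a set \<Rightarrow> 'a set \<Rightarrow> 'a \<Rightarrow> 'a \<Rightarrow> 'a" where
  "pmult Phi R M a b = (if b = 0 \<or> rep Phi R b \<in> M then 0 else autof Phi R b a)"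

definition is_planar :: "('a::group_add \<Rightarrow> 'a \<Rightarrow> 'a) \<Rightarrow> bool" where
  "is_planar mul \<longleftrightarrow>
     (let eqv = (\<lambda>a b. \<forall>x. mul x a = mul x b) in
      (\<exists>a b c. \<not> eqv a b \<and> \<not> eqv a c \<and> \<not> eqv b c) \<and>
      (\<forall>a b c. \<not> eqv a b \<longrightarrow> (\<exists>!x. mul x a = mul x b + c)))"

definition planar_presented :: "('a::group_add \<Rightarrow> 'a) set \<Rightarrow> 'a set \<Rightarrow> 'a set \<Rightarrow> bool" where
  "planar_presented Phi R M \<longleftrightarrow> presentation Phi R M \<and> is_planar (pmult Phi R M)"

definition Dset :: "('a::group_add \<Rightarrow> 'a \<Rightarrow> 'a) \<Rightarrow> 'a set" where
  "Dset mul = {n. \<forall>a b. mul n (a + b) = mul n a + mul n b}"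

definition GC :: "('a::group_add \<Rightarrow> 'a \<Rightarrow> 'a) \<Rightarrow> 'a set" where
  "GC mul = {n. \<forall>d\<in>Dset mul. mul n d = mul d n}"

definition zero_multipliers :: "('a::group_add \<Rightarrow> 'a \<Rightarrow> 'a) \<Rightarrow> 'a set" where
  "zero_multipliers mul = {n. \<forall>x. mul x n = 0}"

definition is_ideal :: "('a::group_add \<Rightarrow> 'a \<Rightarrow> 'a) \<Rightarrow> 'a set \<Rightarrow> bool" where
  "is_ideal mul I \<longleftrightarrow>
     0 \<in> I \<and> (\<forall>i\<in>I. \<forall>j\<in>I. i + j \<in> I) \<and> (\<forall>i\<in>I. - i \<in> I) \<and>
     (\<forall>i\<in>I. \<forall>n. n + i - n \<in> I) \<and>
     (\<forall>i\<in>I. \<forall>n. mul i n \<in> I) \<and>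
     (\<forall>i\<in>I. \<forall>n m. mul n m - mul n (m + i) \<in> I)"

definition centre :: "('a \<Rightarrow> 'a) set \<Rightarrow> ('a \<Rightarrow> 'a) set" where
  "centre Phi = {phi \<in> Phi. \<forall>psi\<in>Phi. phi \<circ> psi = psi \<circ> phi}"

end

theory Submission
  imports Defs
begin

context
  fixes Phi :: "('a::group_add \<Rightarrow> 'a) set" and R M :: "'a set"
  assumes P: "presentation Phi R M"
begin

lemma FP: "ferrero_pair Phi" using P unfolding presentation_def by (elim conjE)
lemma P0: "0 \<notin> R" using P unfolding presentation_def by (elim conjE)
lemma PU: "a \<noteq> 0 \<Longrightarrow> \<exists>!r. r \<in> R \<and> a \<in> orbit Phi r" using P unfolding presentation_def by (elim conjE) (erule allE, erule impE, assumption, assumption)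

lemma FPa: "\<forall>phi\<in>Phi. is_aut phi" using FP unfolding ferrero_pair_def by (rule conjunct1)
lemma FPid: "id \<in> Phi" using FP unfolding ferrero_pair_def by (elim conjE)
lemma FPcomp: "phi \<in> Phi \<Longrightarrow> psi \<in> Phi \<Longrightarrow> phi \<circ> psi \<in> Phi"
  using FP unfolding ferrero_pair_def by (elim conjE) (erule ballE, erule ballE, assumption, simp, simp)
lemma FPinv: "phi \<in> Phi \<Longrightarrow> inv phi \<in> Phi" using FP unfolding ferrero_pair_def by (elim conjE) (erule ballE, assumption, simp)
lemma FPfix: "phi \<in> Phi \<Longrightarrow> phi \<noteq> id \<Longrightarrow> phi x = x \<Longrightarrow> x = 0"
  using FP unfolding ferrero_pair_def by (elim conjE) (erule ballE, erule impE, assumption, erule allE, erule impE, assumption, assumption, simp)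
lemma aut: "phi \<in> Phi \<Longrightarrow> is_aut phi" using FPa by (rule bspec)

lemma aut_bij: "phi \<in> Phi \<Longrightarrow> bij phi" using aut[unfolded is_aut_def] by (rule conjunct1)
lemma phi_add: assumes "phi \<in> Phi" shows "phi (x + y) = phi x + phi y"
proof -
  have "bij phi \<and> (\<forall>x y. phi (x + y) = phi x + phi y)" using aut[OF assms] unfolding is_aut_def .
  then show ?thesis by simp
qed

lemma phi0: "phi \<in> Phi \<Longrightarrow> phi 0 = 0"
proof -
  assume "phi \<in> Phi"
  then have "phi (0 + 0) = phi 0 + phi 0" by (rule phi_add)
  then have "phi 0 + phi 0 = phi 0 + 0" by simp
  then show ?thesis by (simp only: add_left_cancel)
qed

lemma phi_eq0: "phi \<in> Phi \<Longrightarrow> phi x = 0 \<longleftrightarrow> x = 0"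
proof -
  assume h: "phi \<in> Phi"
  then have "inj phi" using aut_bij bij_is_inj by blast
  then show ?thesis using phi0[OF h] by (metis injD)
qed

lemma fpf: assumes "phi \<in> Phi" "psi \<in> Phi" "x \<noteq> 0" "phi x = psi x" shows "phi = psi"
proof -
  have bp: "bij psi" using aut_bij assms(2) by blast
  have c: "inv psi \<circ> phi \<in> Phi" using FPcomp FPinv assms(1,2) by blast
  have "(inv psi \<circ> phi) x = x" using assms(4) bp by (simp add: bij_is_inj)
  then have "inv psi \<circ> phi = id" using FPfix[OF c] assms(3) by blast
  then have "\<And>y. inv psi (phi y) = y" by (metis comp_apply id_apply)
  then have "\<And>y. phi y = psi y" using bp by (metis bij_inv_eq_iff)
  then show ?thesis by blast
qed

lemma orbit_comp: "psi \<in> Phi \<Longrightarrow> orbit Phi (psi r) = orbit Phi r"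
proof -
  assume ps: "psi \<in> Phi"
  have bp: "bij psi" using aut_bij ps by blast
  show ?thesis
  proof
    show "orbit Phi (psi r) \<subseteq> orbit Phi r"
    proof
      fix y assume "y \<in> orbit Phi (psi r)"
      then obtain phi where ph: "phi \<in> Phi" "y = phi (psi r)" unfolding orbit_def by blast
      have "phi \<circ> psi \<in> Phi" using FPcomp FPinv ph ps by blast
      moreover have "(phi \<circ> psi) r = y" using ph by simp
      ultimately show "y \<in> orbit Phi r" unfolding orbit_def by blast
    qed
  next
    show "orbit Phi r \<subseteq> orbit Phi (psi r)"
    proof
      fix y assume "y \<in> orbit Phi r"
      then obtain phi where ph: "phi \<in> Phi" "y = phi r" unfolding orbit_def by blast
      have "phi \<circ> inv psi \<in> Phi" using FPcomp FPinv ph ps by blast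
      moreover have "(phi \<circ> inv psi) (psi r) = y" using ph bp by (simp add: bij_is_inj)
      ultimately show "y \<in> orbit Phi (psi r)" unfolding orbit_def by blast
    qed
  qed
qed

lemma rep1: "a \<noteq> 0 \<Longrightarrow> rep Phi R a \<in> R \<and> a \<in> orbit Phi (rep Phi R a)"
proof -
  assume "a \<noteq> 0"
  then have "\<exists>!r. r \<in> R \<and> a \<in> orbit Phi r" using PU by blast
  then show ?thesis unfolding rep_def by (rule theI')
qed

lemma rep_eq: "a \<noteq> 0 \<Longrightarrow> r \<in> R \<Longrightarrow> a \<in> orbit Phi r \<Longrightarrow> rep Phi R a = r"
proof -
  assume a: "a \<noteq> 0" "r \<in> R" "a \<in> orbit Phi r"
  then have "\<exists>!r. r \<in> R \<and> a \<in> orbit Phi r" using PU by blast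
  then show ?thesis unfolding rep_def by (rule the1_equality) (use a in blast)
qed

lemma rep_ne0: "a \<noteq> 0 \<Longrightarrow> rep Phi R a \<noteq> 0"
  using rep1 P0 by metis

lemma autof1: "a \<noteq> 0 \<Longrightarrow> autof Phi R a \<in> Phi \<and> a = autof Phi R a (rep Phi R a)"
proof -
  assume a: "a \<noteq> 0"
  have "\<exists>!phi. phi \<in> Phi \<and> a = phi (rep Phi R a)"
  proof -
    obtain phi where "phi \<in> Phi" "a = phi (rep Phi R a)" using rep1[OF a] unfolding orbit_def by blast
    moreover have "\<And>p q. p \<in> Phi \<Longrightarrow> a = p (rep Phi R a) \<Longrightarrow> q \<in> Phi \<Longrightarrow> a = q (rep Phi R a) \<Longrightarrow> p = q"
    proof -
      fix p q assume h: "p \<in> Phi" "a = p (rep Phi R a)" "q \<in> Phi" "a = q (rep Phi R a)"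
      show "p = q" by (rule fpf[OF h(1) h(3) rep_ne0[OF a]]) (use h in simp)
    qed
    ultimately show ?thesis by blast
  qed
  then show ?thesis unfolding autof_def by (rule theI')
qed

lemma autof_eq: "a \<noteq> 0 \<Longrightarrow> phi \<in> Phi \<Longrightarrow> a = phi (rep Phi R a) \<Longrightarrow> autof Phi R a = phi"
proof -
  assume h: "a \<noteq> 0" "phi \<in> Phi" "a = phi (rep Phi R a)"
  show ?thesis by (rule fpf[OF conjunct1[OF autof1[OF h(1)]] h(2) rep_ne0[OF h(1)]]) (use h autof1[OF h(1)] in simp)
qed

lemma rep_phi: "phi \<in> Phi \<Longrightarrow> a \<noteq> 0 \<Longrightarrow> rep Phi R (phi a) = rep Phi R a"
proof -
  assume ph: "phi \<in> Phi" and a: "a \<noteq> 0"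
  have "phi a \<noteq> 0" using phi_eq0 ph a by blast
  moreover have "phi a \<in> orbit Phi (rep Phi R a)"
  proof -
    obtain psi where ps: "psi \<in> Phi" "a = psi (rep Phi R a)" using rep1[OF a] unfolding orbit_def by blast
    have "phi \<circ> psi \<in> Phi" using FPcomp FPinv ph ps by blast
    then show ?thesis using ps unfolding orbit_def by (metis (mono_tags, lifting) comp_apply mem_Collect_eq)
  qed
  ultimately show ?thesis using rep_eq rep1[OF a] by blast
qed

lemma comm_rep: assumes "a \<noteq> 0" "b \<noteq> 0" "autof Phi R a b = autof Phi R b a"
  shows "rep Phi R a = rep Phi R b"
  using rep_phi[OF conjunct1[OF autof1[OF assms(1)]] assms(2)]
        rep_phi[OF conjunct1[OF autof1[OF assms(2)]] assms(1)] assms(3) by simp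


lemma mul_def': "pmult Phi R M x b = (if b = 0 \<or> rep Phi R b \<in> M then 0 else autof Phi R b x)"
  unfolding pmult_def by simp

lemma mul0l: "pmult Phi R M 0 b = 0"
  unfolding mul_def' using phi0 autof1 by auto

lemma D0: "0 \<in> Dset (pmult Phi R M)"
  unfolding Dset_def using mul0l by simp

lemma ZM_intro: "b = 0 \<or> rep Phi R b \<in> M \<Longrightarrow> b \<in> zero_multipliers (pmult Phi R M)"
  unfolding zero_multipliers_def mul_def' by auto

lemma nZM: "b \<notin> zero_multipliers (pmult Phi R M) \<Longrightarrow> b \<noteq> 0 \<and> rep Phi R b \<notin> M"
  using ZM_intro by blast

lemma mul_nz: "b \<noteq> 0 \<Longrightarrow> rep Phi R b \<notin> M \<Longrightarrow> pmult Phi R M x b = autof Phi R b x"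
  unfolding mul_def' by simp

lemma autof_nz: "b \<noteq> 0 \<Longrightarrow> x \<noteq> 0 \<Longrightarrow> autof Phi R b x \<noteq> 0"
  using phi_eq0 autof1 by blast

lemma D_nz: assumes "Dset (pmult Phi R M) \<noteq> {0}"
  obtains d where "d \<in> Dset (pmult Phi R M)" "d \<noteq> 0"
  using assms D0 by blast

lemma ZM_iff_d: assumes "d \<noteq> 0"
  shows "b \<in> zero_multipliers (pmult Phi R M) \<longleftrightarrow> pmult Phi R M d b = 0"
proof
  assume "b \<in> zero_multipliers (pmult Phi R M)" then show "pmult Phi R M d b = 0"
    unfolding zero_multipliers_def by blast
next
  assume h: "pmult Phi R M d b = 0"
  show "b \<in> zero_multipliers (pmult Phi R M)"
  proof (rule ccontr)
    assume "b \<notin> zero_multipliers (pmult Phi R M)"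
    then have "b \<noteq> 0" "rep Phi R b \<notin> M" using nZM by blast+
    then show False using h mul_nz autof_nz assms by metis
  qed
qed

lemma part1: assumes "Dset (pmult Phi R M) \<noteq> {0}"
  "Dset (pmult Phi R M) \<subseteq> zero_multipliers (pmult Phi R M)"
  shows "GC (pmult Phi R M) = zero_multipliers (pmult Phi R M)"
proof -
  obtain d where d: "d \<in> Dset (pmult Phi R M)" "d \<noteq> 0" using D_nz assms(1) by blast
  show ?thesis
  proof
    show "GC (pmult Phi R M) \<subseteq> zero_multipliers (pmult Phi R M)"
    proof
      fix n assume n: "n \<in> GC (pmult Phi R M)"
      have "d \<in> zero_multipliers (pmult Phi R M)" using d assms(2) by blast
      then have "pmult Phi R M n d = 0" unfolding zero_multipliers_def by simp
      moreover have "pmult Phi R M n d = pmult Phi R M d n" using n d unfolding GC_def by simp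
      ultimately have "pmult Phi R M d n = 0" by simp
      then show "n \<in> zero_multipliers (pmult Phi R M)" using ZM_iff_d d by blast
    qed
  next
    show "zero_multipliers (pmult Phi R M) \<subseteq> GC (pmult Phi R M)"
    proof
      fix n assume n: "n \<in> zero_multipliers (pmult Phi R M)"
      have "pmult Phi R M n e = pmult Phi R M e n" if e: "e \<in> Dset (pmult Phi R M)" for e
      proof -
        have "e \<in> zero_multipliers (pmult Phi R M)" using e assms(2) by blast
        then show ?thesis using n unfolding zero_multipliers_def by simp
      qed
      then show "n \<in> GC (pmult Phi R M)" unfolding GC_def by simp
    qed
  qed
qed

lemma part1b: assumes "d \<in> Dset (pmult Phi R M)" "d \<noteq> 0"
  shows "is_ideal (pmult Phi R M) (zero_multipliers (pmult Phi R M))"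
proof -
  let ?f = "pmult Phi R M d"
  let ?Z = "zero_multipliers (pmult Phi R M)"
  have add: "\<And>a b. ?f (a + b) = ?f a + ?f b" using assms(1) unfolding Dset_def by simp
  have Z: "\<And>b. b \<in> ?Z \<longleftrightarrow> ?f b = 0" using ZM_iff_d assms(2) by blast
  have f0: "?f 0 = 0" using Z ZM_intro by blast
  have fneg: "\<And>a. ?f (- a) = - ?f a"
  proof -
    fix a have "?f (- a) + ?f a = 0" using add[of "-a" a] f0 by simp
    then show "?f (- a) = - ?f a" by (simp add: eq_neg_iff_add_eq_0)
  qed
  have c1: "0 \<in> ?Z" using ZM_intro by blast
  have c2: "\<forall>i\<in>?Z. \<forall>j\<in>?Z. i + j \<in> ?Z" using Z add by simp
  have c3: "\<forall>i\<in>?Z. - i \<in> ?Z" using Z fneg by simp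
  have c4: "\<forall>i\<in>?Z. \<forall>n. n + i - n \<in> ?Z"
  proof (intro ballI allI)
    fix i n assume "i \<in> ?Z"
    then have "?f i = 0" using Z by blast
    then have "?f (n + i + - n) = ?f n + - ?f n" using add fneg by (simp only: add_0_right)
    moreover have "?f n + - ?f n = 0" by (rule right_minus)
    ultimately have "?f (n + i + - n) = 0" by (simp only:)
    then have "n + i + - n \<in> ?Z" using Z by blast
    then show "n + i - n \<in> ?Z" by (simp only: diff_conv_add_uminus)
  qed
  have c5: "\<forall>i\<in>?Z. \<forall>n. pmult Phi R M i n \<in> ?Z"
  proof (intro ballI allI)
    fix i n assume i: "i \<in> ?Z"
    show "pmult Phi R M i n \<in> ?Z"
    proof (cases "n = 0 \<or> rep Phi R n \<in> M")
      case True then show ?thesis using c1 unfolding mul_def' by simp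
    next
      case False
      then have e: "pmult Phi R M i n = autof Phi R n i" and ph: "autof Phi R n \<in> Phi"
        using mul_nz autof1 by auto
      show ?thesis
      proof (cases "i = 0")
        case True then show ?thesis using e phi0[OF ph] c1 by simp
      next
        case False
        have "rep Phi R i \<in> M"
        proof (rule ccontr)
          assume "rep Phi R i \<notin> M"
          then have "?f i = autof Phi R i d" using mul_nz False by blast
          moreover have "autof Phi R i d \<noteq> 0" using autof_nz False assms(2) by blast
          moreover have "?f i = 0" using i Z by blast
          ultimately show False by simp
        qed
        then show ?thesis using e rep_phi[OF ph False] ZM_intro by simp
      qed
    qed
  qed
  have c6: "\<forall>i\<in>?Z. \<forall>n m. pmult Phi R M n m - pmult Phi R M n (m + i) \<in> ?Z"
  proof (intro ballI allI)
    fix i n m assume i: "i \<in> ?Z"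
    show "pmult Phi R M n m - pmult Phi R M n (m + i) \<in> ?Z"
    proof (cases "m \<in> ?Z")
      case True
      then have "m + i \<in> ?Z" using c2 i by blast
      then show ?thesis using True c1 unfolding zero_multipliers_def by simp
    next
      case False
      have mi: "m + i \<notin> ?Z"
      proof
        assume "m + i \<in> ?Z"
        then have "m + i + - i \<in> ?Z" using c2 c3 i by blast
        then show False using False by (simp add: add.assoc)
      qed
      have eq: "?f (m + i) = ?f m" using add Z i by simp
      have m1: "m \<noteq> 0" "rep Phi R m \<notin> M" using nZM False by blast+
      have m2: "m + i \<noteq> 0" "rep Phi R (m + i) \<notin> M" using nZM mi by blast+
      have "autof Phi R (m + i) d = autof Phi R m d" using eq mul_nz m1 m2 by simp
      then have "autof Phi R (m + i) = autof Phi R m"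
        using fpf[OF conjunct1[OF autof1[OF m2(1)]] conjunct1[OF autof1[OF m1(1)]] assms(2)] by blast
      then have "pmult Phi R M n m = pmult Phi R M n (m + i)" using mul_nz m1 m2 by simp
      then show ?thesis using c1 by simp
    qed
  qed
  show ?thesis unfolding is_ideal_def using c1 c2 c3 c4 c5 c6 by blast
qed

lemma GC_nz: assumes "n \<in> GC (pmult Phi R M)" "n \<noteq> 0" "d \<in> Dset (pmult Phi R M)"
  "d \<noteq> 0" "rep Phi R d \<notin> M"
  shows "rep Phi R n \<notin> M \<and> rep Phi R n = rep Phi R d"
proof -
  have e: "pmult Phi R M n d = pmult Phi R M d n" using assms(1,3) unfolding GC_def by simp
  have a1: "pmult Phi R M n d = autof Phi R d n" using mul_nz[OF assms(4,5)] .
  have a2: "autof Phi R d n \<noteq> 0" using autof_nz[OF assms(4,2)] .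
  have nz: "pmult Phi R M d n \<noteq> 0" using e a1 a2 by simp
  then have nM: "rep Phi R n \<notin> M" unfolding mul_def' by (auto split: if_splits)
  have a3: "pmult Phi R M d n = autof Phi R n d" using mul_nz[OF assms(2) nM] .
  have "autof Phi R d n = autof Phi R n d" using e a1 a3 by simp
  then have "rep Phi R d = rep Phi R n" by (rule comm_rep[OF assms(4,2)])
  then show ?thesis using nM by simp
qed

lemma orbit_rep: assumes "a \<noteq> 0" shows "orbit Phi a = orbit Phi (rep Phi R a)"
proof -
  have e: "autof Phi R a (rep Phi R a) = a" using conjunct2[OF autof1[OF assms]] by (rule sym)
  show ?thesis using orbit_comp[OF conjunct1[OF autof1[OF assms]], of "rep Phi R a", unfolded e] .
qed

lemma part2: assumes "a \<in> Dset (pmult Phi R M) - {0}" "b \<in> Dset (pmult Phi R M) - {0}"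
  "orbit Phi a \<noteq> orbit Phi b" "\<not> Dset (pmult Phi R M) \<subseteq> zero_multipliers (pmult Phi R M)"
  shows "GC (pmult Phi R M) = {0}"
proof -
  obtain d0 where d0: "d0 \<in> Dset (pmult Phi R M)" "d0 \<notin> zero_multipliers (pmult Phi R M)"
    using assms(4) by blast
  have d0': "d0 \<noteq> 0" "rep Phi R d0 \<notin> M" using nZM d0(2) by blast+
  have "n = 0" if n: "n \<in> GC (pmult Phi R M)" for n
  proof (rule ccontr)
    assume nz: "n \<noteq> 0"
    have nM: "rep Phi R n \<notin> M" using GC_nz[OF n nz d0(1) d0'] by blast
    have H: "rep Phi R x = rep Phi R n" if x: "x \<in> Dset (pmult Phi R M)" "x \<noteq> 0" for x
    proof -
      have e: "pmult Phi R M n x = pmult Phi R M x n" using n x unfolding GC_def by simp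
      have "pmult Phi R M x n = autof Phi R n x" using mul_nz[OF nz nM] .
      moreover have "autof Phi R n x \<noteq> 0" using autof_nz[OF nz x(2)] .
      ultimately have "pmult Phi R M n x \<noteq> 0" using e by simp
      then have xM: "rep Phi R x \<notin> M" unfolding mul_def' by (auto split: if_splits)
      show ?thesis using GC_nz[OF n nz x xM] by simp
    qed
    have a0: "a \<in> Dset (pmult Phi R M)" "a \<noteq> 0" using assms(1) by auto
    have b0: "b \<in> Dset (pmult Phi R M)" "b \<noteq> 0" using assms(2) by auto
    have "orbit Phi a = orbit Phi (rep Phi R a)" using orbit_rep[OF a0(2)] .
    also have "\<dots> = orbit Phi (rep Phi R b)" using H[OF a0] H[OF b0] by simp
    also have "\<dots> = orbit Phi b" using orbit_rep[OF b0(2)] by simp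
    finally show False using assms(3) by simp
  qed
  moreover have "0 \<in> GC (pmult Phi R M)" unfolding GC_def using mul0l mul_def' by simp
  ultimately show ?thesis by blast
qed

lemma part3a: assumes "r \<in> R - M" "Dset (pmult Phi R M) - {0} \<subseteq> orbit Phi r"
  shows "(\<lambda>phi. phi r) ` centre Phi \<union> {0} \<subseteq> GC (pmult Phi R M)"
proof -
  have rR: "r \<in> R" "r \<notin> M" using assms(1) by auto
  have r0: "r \<noteq> 0" using P0 rR by blast
  have g0: "0 \<in> GC (pmult Phi R M)" unfolding GC_def using mul0l mul_def' by simp
  have "phi r \<in> GC (pmult Phi R M)" if ph: "phi \<in> centre Phi" for phi
  proof -
    have phP: "phi \<in> Phi" using ph unfolding centre_def by simp
    let ?n = "phi r"
    have n0: "?n \<noteq> 0" using phi_eq0 phP r0 by blast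
    have "?n \<in> orbit Phi r" unfolding orbit_def using phP by blast
    then have rn: "rep Phi R ?n = r" using rep_eq[OF n0 rR(1)] by blast
    have an: "autof Phi R ?n = phi" using autof_eq[OF n0 phP] rn by simp
    have nM: "rep Phi R ?n \<notin> M" using rn rR by simp
    have "pmult Phi R M ?n d = pmult Phi R M d ?n" if d: "d \<in> Dset (pmult Phi R M)" for d
    proof (cases "d = 0")
      case True then show ?thesis using mul0l mul_def' by simp
    next
      case False
      have "d \<in> orbit Phi r" using assms(2) d False by blast
      then have rd: "rep Phi R d = r" using rep_eq[OF False rR(1)] by blast
      have dM: "rep Phi R d \<notin> M" using rd rR by simp
      define psi where "psi = autof Phi R d"
      have ps1: "psi \<in> Phi" unfolding psi_def using autof1[OF False] by blast
      have ps2: "psi r = d" unfolding psi_def using conjunct2[OF autof1[OF False], unfolded rd] by (rule sym)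
      have "pmult Phi R M ?n d = psi (phi r)" unfolding psi_def by (rule mul_nz[OF False dM])
      moreover have "pmult Phi R M d ?n = phi (psi r)" unfolding ps2 using mul_nz[OF n0 nM] an by simp
      moreover have "phi \<circ> psi = psi \<circ> phi" using ph ps1 unfolding centre_def by blast
      ultimately show ?thesis by (metis comp_apply)
    qed
    then show ?thesis unfolding GC_def by simp
  qed
  then show ?thesis using g0 by blast
qed

lemma part3b: assumes "r \<in> R - M" "Dset (pmult Phi R M) - {0} \<subseteq> orbit Phi r"
  "Dset (pmult Phi R M) \<noteq> {0}"
  shows "GC (pmult Phi R M) \<subseteq> orbit Phi r \<union> {0}"
proof
  fix n assume n: "n \<in> GC (pmult Phi R M)"
  have rR: "r \<in> R" "r \<notin> M" using assms(1) by auto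
  obtain d where d: "d \<in> Dset (pmult Phi R M)" "d \<noteq> 0" using D_nz assms(3) by blast
  have "d \<in> orbit Phi r" using assms(2) d by blast
  then have rd: "rep Phi R d = r" using rep_eq[OF d(2) rR(1)] by blast
  have dM: "rep Phi R d \<notin> M" using rd rR by simp
  show "n \<in> orbit Phi r \<union> {0}"
  proof (cases "n = 0")
    case False
    then have "rep Phi R n = r" using GC_nz[OF n False d dM] rd by simp
    then show ?thesis using rep1[OF False] by simp
  qed simp
qed

lemma part4: assumes "Dset (pmult Phi R M) = {0}" shows "GC (pmult Phi R M) = UNIV"
  unfolding GC_def assms using mul0l mul_def' by simp

end

theorem mainTheorem10:
  fixes Phi :: "('a::group_add \<Rightarrow> 'a) set" and R M :: "'a set"
  assumes "planar_presented Phi R M"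
  defines "mul \<equiv> pmult Phi R M"
  shows "(Dset mul \<noteq> {0} \<and> Dset mul \<subseteq> zero_multipliers mul \<longrightarrow>
            GC mul = zero_multipliers mul \<and> is_ideal mul (zero_multipliers mul))
       \<and> ((\<exists>a\<in>Dset mul - {0}. \<exists>b\<in>Dset mul - {0}. orbit Phi a \<noteq> orbit Phi b) \<and>
            \<not> Dset mul \<subseteq> zero_multipliers mul \<longrightarrow> GC mul = {0})
       \<and> (\<forall>r. r \<in> R - M \<and> Dset mul - {0} \<subseteq> orbit Phi r \<and> Dset mul \<noteq> {0} \<longrightarrow>
            (\<lambda>phi. phi r) ` centre Phi \<union> {0} \<subseteq> GC mul \<and> GC mul \<subseteq> orbit Phi r \<union> {0})
       \<and> (Dset mul = {0} \<longrightarrow> GC mul = UNIV)"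
proof -
  have P: "presentation Phi R M" using assms(1) unfolding planar_presented_def by (rule conjunct1)
  have Mu: "mul = pmult Phi R M" using assms(2) by simp
  show ?thesis unfolding Mu
  proof (intro conjI impI allI)
    assume h: "Dset (pmult Phi R M) \<noteq> {0} \<and> Dset (pmult Phi R M) \<subseteq> zero_multipliers (pmult Phi R M)"
    then show "GC (pmult Phi R M) = zero_multipliers (pmult Phi R M)"
      using part1[OF P] by blast
    obtain d where "d \<in> Dset (pmult Phi R M)" "d \<noteq> 0" using D_nz[OF P] h by blast
    then show "is_ideal (pmult Phi R M) (zero_multipliers (pmult Phi R M))" by (rule part1b[OF P])
  next
    assume h: "(\<exists>a\<in>Dset (pmult Phi R M) - {0}. \<exists>b\<in>Dset (pmult Phi R M) - {0}. orbit Phi a \<noteq> orbit Phi b) \<and>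
            \<not> Dset (pmult Phi R M) \<subseteq> zero_multipliers (pmult Phi R M)"
    then obtain a b where "a \<in> Dset (pmult Phi R M) - {0}" "b \<in> Dset (pmult Phi R M) - {0}"
      "orbit Phi a \<noteq> orbit Phi b" by blast
    then show "GC (pmult Phi R M) = {0}" using part2[OF P] h by blast
  next
    fix r assume h: "r \<in> R - M \<and> Dset (pmult Phi R M) - {0} \<subseteq> orbit Phi r \<and> Dset (pmult Phi R M) \<noteq> {0}"
    then show "(\<lambda>phi. phi r) ` centre Phi \<union> {0} \<subseteq> GC (pmult Phi R M)" using part3a[OF P] by blast
    show "GC (pmult Phi R M) \<subseteq> orbit Phi r \<union> {0}" using h part3b[OF P] by blast
  next
    assume "Dset (pmult Phi R M) = {0}"
    then show "GC (pmult Phi R M) = UNIV" by (rule part4[OF P])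
  qed
qed

end
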